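(* Let $\mathcal C\subseteq(\mathbb C^2)^{\otimes n}$ be the codespace of a stabilizer code and let $\pi\in S_n$ be a qubit permutation with permutation operator $U_\pi$ such that $U_\pi\mathcal C=\mathcal C$, the restriction $U_\pi|_{\mathcal C}$ is not a scalar multiple of the identity, and $(U_\pi|_{\mathcal C})^2$ is a scalar multiple of the identity on $\mathcal C$. Then the order of $\pi$ in $S_n$ is even.
   Context: $U_\pi$ denotes the unitary on $(\mathbb C^2)^{\otimes n}$ that permutes tensor factors according to $\pi$; the order (period) of $\pi$ is the least $p\ge1$ with $\pi^p=\mathrm{id}$. *)

theory Defs
  imports Complex_Main "HOL-Combinatorics.Permutations"
begin

text \<open>n-qubit states: computational basis vectors are indexed by bit strings
  x in {0,1}^n, encoded as the subset of positions {..<n} where the bit is 1.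
  A state is a complex function on such subsets, vanishing elsewhere.\<close>

type_synonym state = "nat set \<Rightarrow> complex"

definition qstates :: "nat \<Rightarrow> state set" where
  "qstates n = {\<psi>. \<forall>x. \<not> x \<subseteq> {..<n} \<longrightarrow> \<psi> x = 0}"

definition symdiff :: "nat set \<Rightarrow> nat set \<Rightarrow> nat set" where
  "symdiff x y = (x - y) \<union> (y - x)"

text \<open>Pauli operator i^k X^a Z^b (a, b subsets of {..<n}):
  it maps the basis vector |x> to i^k (-1)^|b \<inter> x| |x xor a>.\<close>

definition pauli_op :: "nat \<Rightarrow> nat set \<Rightarrow> nat set \<Rightarrow> state \<Rightarrow> state" where
  "pauli_op k a b \<psi> = (\<lambda>y. \<i> ^ k * (-1) ^ card (b \<inter> symdiff y a) * \<psi> (symdiff y a))"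

definition pauli_group :: "nat \<Rightarrow> (state \<Rightarrow> state) set" where
  "pauli_group n = {pauli_op k a b | k a b. a \<subseteq> {..<n} \<and> b \<subseteq> {..<n}}"

definition stabilizer_group :: "nat \<Rightarrow> (state \<Rightarrow> state) set \<Rightarrow> bool" where
  "stabilizer_group n S \<longleftrightarrow>
     S \<subseteq> pauli_group n \<and> pauli_op 0 {} {} \<in> S \<and>
     (\<forall>P\<in>S. \<forall>Q\<in>S. P \<circ> Q \<in> S) \<and>
     (\<forall>P\<in>S. \<forall>Q\<in>S. P \<circ> Q = Q \<circ> P) \<and>
     pauli_op 2 {} {} \<notin> S"

definition codespace :: "nat \<Rightarrow> (state \<Rightarrow> state) set \<Rightarrow> state set" where
  "codespace n S = {\<psi> \<in> qstates n. \<forall>P\<in>S. P \<psi> = \<psi>}"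

text \<open>Qubit permutation operator U_pi: |x> \<mapsto> |pi ` x>, i.e. qubit i is moved to position pi i.\<close>

definition perm_op :: "(nat \<Rightarrow> nat) \<Rightarrow> state \<Rightarrow> state" where
  "perm_op \<pi> \<psi> = (\<lambda>y. \<psi> (\<pi> -` y))"

definition perm_order :: "(nat \<Rightarrow> nat) \<Rightarrow> nat" where
  "perm_order \<pi> = (LEAST p. p \<ge> 1 \<and> \<pi> ^^ p = id)"

definition scal :: "complex \<Rightarrow> state \<Rightarrow> state" where
  "scal c \<psi> = (\<lambda>y. c * \<psi> y)"

end

theory Submission
  imports Defs "HOL-Combinatorics.Cycles"
begin

lemma perm_op_pow: "(perm_op \<pi> ^^ k) \<psi> = (\<lambda>y. \<psi> ((\<pi> ^^ k) -` y))"
proof (induction k)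
  case 0 then show ?case by simp
next
  case (Suc k)
  then show ?case by (simp add: perm_op_def vimage_comp comp_def)
qed

lemma perm_op_scal: "perm_op \<pi> (scal a \<phi>) = scal a (perm_op \<pi> \<phi>)"
  by (simp add: perm_op_def scal_def)

lemma perm_op_pow_scal: "(perm_op \<pi> ^^ k) (scal a \<phi>) = scal a ((perm_op \<pi> ^^ k) \<phi>)"
  by (simp add: perm_op_pow scal_def)

theorem mainTheorem7:
  fixes n :: nat and S :: "(state \<Rightarrow> state) set" and \<pi> :: "nat \<Rightarrow> nat"
  assumes "stabilizer_group n S"
    and "\<pi> permutes {..<n}"
    and "perm_op \<pi> ` codespace n S = codespace n S"
    and "\<not> (\<exists>c. \<forall>\<psi>\<in>codespace n S. perm_op \<pi> \<psi> = scal c \<psi>)"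
    and "\<exists>c. \<forall>\<psi>\<in>codespace n S. perm_op \<pi> (perm_op \<pi> \<psi>) = scal c \<psi>"
  shows "even (perm_order \<pi>)"
proof (rule ccontr)
  assume odd: "\<not> even (perm_order \<pi>)"
  have "permutation \<pi>" using assms(2) permutation_permutes by blast
  then obtain q where q: "\<pi> ^^ q = id" "q > 0" by (rule permutation_is_nilpotent)
  have pid: "\<pi> ^^ perm_order \<pi> = id"
    unfolding perm_order_def by (rule LeastI2[of _ q]) (use q in auto)
  obtain m where pm: "perm_order \<pi> = Suc (2*m)" using odd oddE by (metis Suc_eq_plus1)
  obtain c where c: "\<forall>\<psi>\<in>codespace n S. perm_op \<pi> (perm_op \<pi> \<psi>) = scal c \<psi>"
    using assms(5) by blast
  let ?U = "perm_op \<pi>"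
  have ev: "(?U ^^ (2*k)) \<psi> = scal (c^k) \<psi>" if "\<psi> \<in> codespace n S" for k \<psi>
  proof (induction k)
    case 0 then show ?case by (simp add: scal_def)
  next
    case (Suc k)
    have "(?U ^^ (2*Suc k)) \<psi> = ?U (?U ((?U ^^ (2*k)) \<psi>))"
      by (simp add: funpow_Suc_right)
    also have "\<dots> = scal (c^k) (?U (?U \<psi>))" by (simp add: Suc perm_op_scal)
    also have "\<dots> = scal (c^Suc k) \<psi>" using c that by (simp add: scal_def mult_ac)
    finally show ?case .
  qed
  have key: "\<psi> = scal (c^m) (?U \<psi>)" if "\<psi> \<in> codespace n S" for \<psi>
  proof -
    have "\<psi> = (?U ^^ perm_order \<pi>) \<psi>" by (simp add: perm_op_pow pid)
    also have "\<dots> = ?U ((?U ^^ (2*m)) \<psi>)" by (simp add: pm)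
    also have "\<dots> = scal (c^m) (?U \<psi>)" using ev[OF that] by (simp add: perm_op_scal)
    finally show ?thesis .
  qed
  show False
  proof (cases "c^m = 0")
    case True
    have "\<forall>\<psi>\<in>codespace n S. ?U \<psi> = scal 0 \<psi>"
    proof
      fix \<psi> assume h: "\<psi> \<in> codespace n S"
      have z: "\<psi> = (\<lambda>y. 0)" using key[OF h] True by (simp add: scal_def)
      show "?U \<psi> = scal 0 \<psi>" by (subst z) (simp add: perm_op_def scal_def)
    qed
    then show False using assms(4) by blast
  next
    case False
    have "\<forall>\<psi>\<in>codespace n S. ?U \<psi> = scal (1 / c^m) \<psi>"
    proof
      fix \<psi> assume h: "\<psi> \<in> codespace n S"
      have "scal (1 / c^m) \<psi> = scal (1 / c^m) (scal (c^m) (?U \<psi>))"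
        using key[OF h] by simp
      also have "\<dots> = ?U \<psi>" using False by (simp add: scal_def)
      finally show "?U \<psi> = scal (1 / c^m) \<psi>" by simp
    qed
    then show False using assms(4) by blast
  qed
qed

end
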